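(* Let $(\mathcal{J}_g)_{g\in[G]}$ be subsets of $[p]$ with $\bigcup_g\mathcal{J}_g=[p]$, $p_g=|\mathcal{J}_g|$, and suppose there is a constant $C_1>0$ with $\max_{j\in[p]}|\{g:j\in\mathcal{J}_g\}|\le C_1$. Let $A=\delta vu^\top\in\mathbb{R}^{p\times(n-1)}$ with $\delta>0$, $v\in\mathbb{R}^p$, $u\in\mathbb{R}^{n-1}$, $\|v\|_2=\|u\|_2=1$ and $\sum_{g:v_{\mathcal{J}_g}\ne0}p_g\le k$. Suppose $T\in\mathbb{R}^{p\times(n-1)}$ satisfies $\|T-A\|_{\mathrm{grp}*}\le\lambda$ for some $\lambda>0$, and let $\mathcal{S}=\{M\in\mathbb{R}^{p\times(n-1)}:\|M\|_{\mathrm F}\le1\}$. Then for any $\hat M\in\operatorname*{argmax}_{M\in\mathcal{S}}\{\langle T,M\rangle-\lambda\|M\|_{\mathrm{grp}}\}$, \[ \|vu^\top-\hat M\|_{\mathrm F}\le\frac{4\lambda(C_1nk)^{1/2}}{\delta}, \] and, letting $\hat v,\hat u$ be leading left and right singular vectors of $\hat M$, \[ \max\{\sin\angle(v,\hat v),\sin\angle(u,\hat u)\}\le\frac{8\lambda(C_1nk)^{1/2}}{\delta}. \]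
   Context: $\|M\|_{\mathrm{grp}}=\sum_{g=1}^Gp_g^{1/2}\sum_{t}\|M_{\mathcal{J}_g,t}\|_2$ and $\|R\|_{\mathrm{grp}*}=\max_{g}\max_{t}p_g^{-1/2}\|R_{\mathcal{J}_g,t}\|_2$, where $M_{\mathcal{J}_g,t}$ is the vector of entries of the $t$th column of $M$ with rows in $\mathcal{J}_g$; $\langle A,B\rangle=\mathrm{tr}(A^\top B)$; $\sin\angle(a,b)=\sqrt{1-(a^\top b)^2}$ for unit vectors $a,b$. *)

theory Defs
  imports Complex_Main
begin

text \<open>Matrices in R^(p x m) are represented as functions nat => nat => real,
  only entries with row index < p and column index < m being relevant;
  vectors in R^p as functions nat => real (entries with index < p relevant).
  Row indices are [p] = {0..<p}, groups are indexed by {0..<G}.\<close>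

definition frob :: "nat \<Rightarrow> nat \<Rightarrow> (nat \<Rightarrow> nat \<Rightarrow> real) \<Rightarrow> real" where
  "frob p m M = sqrt (\<Sum>i<p. \<Sum>t<m. (M i t)\<^sup>2)"

definition mat_inner :: "nat \<Rightarrow> nat \<Rightarrow> (nat \<Rightarrow> nat \<Rightarrow> real) \<Rightarrow> (nat \<Rightarrow> nat \<Rightarrow> real) \<Rightarrow> real" where
  "mat_inner p m A B = (\<Sum>i<p. \<Sum>t<m. A i t * B i t)"

definition col_block_norm :: "nat set \<Rightarrow> nat \<Rightarrow> (nat \<Rightarrow> nat \<Rightarrow> real) \<Rightarrow> real" where
  "col_block_norm S t M = sqrt (\<Sum>j\<in>S. (M j t)\<^sup>2)"

definition grp_norm :: "nat \<Rightarrow> (nat \<Rightarrow> nat set) \<Rightarrow> nat \<Rightarrow> (nat \<Rightarrow> nat \<Rightarrow> real) \<Rightarrow> real" where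
  "grp_norm G J m M = (\<Sum>g<G. sqrt (real (card (J g))) * (\<Sum>t<m. col_block_norm (J g) t M))"

definition grp_dual_norm :: "nat \<Rightarrow> (nat \<Rightarrow> nat set) \<Rightarrow> nat \<Rightarrow> (nat \<Rightarrow> nat \<Rightarrow> real) \<Rightarrow> real" where
  "grp_dual_norm G J m R =
     Max ((\<lambda>(g, t). col_block_norm (J g) t R / sqrt (real (card (J g)))) ` ({..<G} \<times> {..<m}))"

definition vnorm :: "nat \<Rightarrow> (nat \<Rightarrow> real) \<Rightarrow> real" where
  "vnorm p x = sqrt (\<Sum>i<p. (x i)\<^sup>2)"

definition vdot :: "nat \<Rightarrow> (nat \<Rightarrow> real) \<Rightarrow> (nat \<Rightarrow> real) \<Rightarrow> real" where
  "vdot p x y = (\<Sum>i<p. x i * y i)"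

definition sin_angle :: "nat \<Rightarrow> (nat \<Rightarrow> real) \<Rightarrow> (nat \<Rightarrow> real) \<Rightarrow> real" where
  "sin_angle p a b = sqrt (1 - (vdot p a b)\<^sup>2)"

definition bilin :: "nat \<Rightarrow> nat \<Rightarrow> (nat \<Rightarrow> real) \<Rightarrow> (nat \<Rightarrow> nat \<Rightarrow> real) \<Rightarrow> (nat \<Rightarrow> real) \<Rightarrow> real" where
  "bilin p m x M y = (\<Sum>i<p. \<Sum>t<m. x i * M i t * y t)"

text \<open>(a, b) is a pair of leading left/right singular vectors of M: unit vectors
  attaining the largest singular value, i.e. maximising x^T M y over unit x, y.\<close>
definition leading_sv_pair :: "nat \<Rightarrow> nat \<Rightarrow> (nat \<Rightarrow> nat \<Rightarrow> real) \<Rightarrow> (nat \<Rightarrow> real) \<Rightarrow> (nat \<Rightarrow> real) \<Rightarrow> bool" where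
  "leading_sv_pair p m M a b \<longleftrightarrow>
     vnorm p a = 1 \<and> vnorm m b = 1 \<and>
     (\<forall>x y. vnorm p x = 1 \<longrightarrow> vnorm m y = 1 \<longrightarrow> bilin p m x M y \<le> bilin p m a M b)"

definition is_argmax_on_S :: "nat \<Rightarrow> nat \<Rightarrow> ((nat \<Rightarrow> nat \<Rightarrow> real) \<Rightarrow> real) \<Rightarrow> (nat \<Rightarrow> nat \<Rightarrow> real) \<Rightarrow> bool" where
  "is_argmax_on_S p m f Mh \<longleftrightarrow> frob p m Mh \<le> 1 \<and> (\<forall>M. frob p m M \<le> 1 \<longrightarrow> f M \<le> f Mh)"

end

theory Submission
  imports Defs "HOL-Analysis.Analysis"
begin



lemma cbn_L2: "col_block_norm S t M = L2_set (\<lambda>j. M j t) S"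
  by (simp add: col_block_norm_def L2_set_def)

lemma sum_groups_swap:
  fixes G p :: nat
  assumes "\<forall>g<G. J g \<subseteq> {..<p}"
  shows "(\<Sum>g<G. \<Sum>j\<in>J g. f j) = (\<Sum>j<p. real (card {g. g<G \<and> j\<in>J g}) * (f j::real))"
proof -
  have "(\<Sum>g<G. \<Sum>j\<in>J g. f j) = (\<Sum>g<G. \<Sum>j<p. if j \<in> J g then f j else 0)"
  proof (rule sum.cong[OF refl])
    fix g assume "g \<in> {..<G}"
    then have "J g \<subseteq> {..<p}" using assms by auto
    then have "{..<p} \<inter> J g = J g" by auto
    then show "(\<Sum>j\<in>J g. f j) = (\<Sum>j<p. if j \<in> J g then f j else 0)"
      by (metis (no_types) finite_lessThan sum.inter_restrict)
  qed
  also have "\<dots> = (\<Sum>j<p. \<Sum>g<G. if j \<in> J g then f j else 0)"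
    by (rule sum.swap)
  also have "\<dots> = (\<Sum>j<p. real (card {g. g<G \<and> j\<in>J g}) * f j)"
  proof (rule sum.cong[OF refl])
    fix j
    have "(\<Sum>g<G. if j \<in> J g then f j else 0) = real (card ({..<G} \<inter> {g. j \<in> J g})) * f j"
      by (simp add: sum.If_cases)
    also have "{..<G} \<inter> {g. j \<in> J g} = {g. g<G \<and> j\<in>J g}" by auto
    finally show "(\<Sum>g<G. if j \<in> J g then f j else 0) = real (card {g. g<G \<and> j\<in>J g}) * f j"
      .
  qed
  finally show ?thesis .
qed

lemma sum_cover_le:
  fixes G p :: nat
  assumes "\<forall>g<G. J g \<subseteq> {..<p}" "(\<Union>g<G. J g) = {..<p}" "\<And>j. f j \<ge> (0::real)"
  shows "(\<Sum>j<p. f j) \<le> (\<Sum>g<G. \<Sum>j\<in>J g. f j)"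
proof -
  have "(\<Sum>j<p. f j) \<le> (\<Sum>j<p. real (card {g. g<G \<and> j\<in>J g}) * f j)"
  proof (rule sum_mono)
    fix j assume "j \<in> {..<p}"
    then obtain g where "g < G" "j \<in> J g" using assms(2) by blast
    then have "{g. g<G \<and> j\<in>J g} \<noteq> {}" by auto
    moreover have "finite {g. g<G \<and> j\<in>J g}" by (rule finite_subset[of _ "{..<G}"]) auto
    ultimately have "card {g. g<G \<and> j\<in>J g} \<ge> 1"
      by (simp add: Suc_leI card_gt_0_iff)
    then show "f j \<le> real (card {g. g<G \<and> j\<in>J g}) * f j"
      using assms(3)[of j] by (simp add: mult_le_cancel_right1)
  qed
  then show ?thesis using sum_groups_swap[OF assms(1)] by simp
qed

lemma sum_overlap_le:
  fixes G p :: nat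
  assumes "\<forall>g<G. J g \<subseteq> {..<p}" "\<forall>j<p. real (card {g. g < G \<and> j \<in> J g}) \<le> C1"
    "\<And>j. f j \<ge> (0::real)"
  shows "(\<Sum>g<G. \<Sum>j\<in>J g. f j) \<le> C1 * (\<Sum>j<p. f j)"
proof -
  have "(\<Sum>j<p. real (card {g. g<G \<and> j\<in>J g}) * f j) \<le> (\<Sum>j<p. C1 * f j)"
    by (rule sum_mono) (use assms in \<open>auto intro: mult_right_mono\<close>)
  then show ?thesis using sum_groups_swap[OF assms(1), of f] by (simp add: sum_distrib_left)
qed

lemma CS2:
  fixes f g :: "nat \<Rightarrow> nat \<Rightarrow> real"
  shows "(\<Sum>i\<in>A. \<Sum>t\<in>B. f i t * g i t)\<^sup>2 \<le> (\<Sum>i\<in>A. \<Sum>t\<in>B. (f i t)\<^sup>2) * (\<Sum>i\<in>A. \<Sum>t\<in>B. (g i t)\<^sup>2)"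
proof -
  have e: "\<And>h :: nat \<Rightarrow> nat \<Rightarrow> real. (\<Sum>i\<in>A. \<Sum>t\<in>B. h i t) = (\<Sum>x\<in>A \<times> B. h (fst x) (snd x))"
    by (simp add: sum.cartesian_product case_prod_beta)
  show ?thesis unfolding e by (rule Cauchy_Schwarz_ineq_sum)
qed

lemma vnorm_eq1: "vnorm p x = 1 \<longleftrightarrow> (\<Sum>i<p. (x i)\<^sup>2) = 1"
  unfolding vnorm_def by simp

lemma sin_bound:
  fixes p m :: nat and M :: "nat \<Rightarrow> nat \<Rightarrow> real" and v u a b :: "nat \<Rightarrow> real" and e :: real
  assumes vs: "(\<Sum>i<p. (v i)\<^sup>2) = 1" and us: "(\<Sum>t<m. (u t)\<^sup>2) = 1"
    and lead: "leading_sv_pair p m M a b"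
    and fD: "sqrt (\<Sum>i<p. \<Sum>t<m. (M i t - v i * u t)\<^sup>2) \<le> e" and e: "e < 1/2"
  shows "sin_angle p v a \<le> 2*e"
proof -
  define D where "D i t = M i t - v i * u t" for i t
  define FD2 where "FD2 = (\<Sum>i<p. \<Sum>t<m. (D i t)\<^sup>2)"
  have FD2_nn: "FD2 \<ge> 0" unfolding FD2_def by (intro sum_nonneg) auto
  have sF: "sqrt FD2 \<le> e" using fD unfolding FD2_def D_def .
  have e0: "e \<ge> 0" using sF real_sqrt_ge_zero[OF FD2_nn] by linarith
  have "(sqrt FD2)\<^sup>2 \<le> e\<^sup>2" using sF by (rule power_mono) (simp add: FD2_nn)
  then have FD2e: "FD2 \<le> e\<^sup>2" using FD2_nn by simp
  have as: "(\<Sum>i<p. (a i)\<^sup>2) = 1" and bs: "(\<Sum>t<m. (b t)\<^sup>2) = 1"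
    using lead unfolding leading_sv_pair_def vnorm_eq1 by auto
  define \<sigma> where "\<sigma> = bilin p m a M b"
  have opt: "\<And>x. (\<Sum>i<p. (x i)\<^sup>2) = 1 \<Longrightarrow> bilin p m x M b \<le> \<sigma>"
    using lead bs unfolding leading_sv_pair_def vnorm_eq1 \<sigma>_def by blast
  have optu: "bilin p m v M u \<le> \<sigma>"
    using lead vs us unfolding leading_sv_pair_def vnorm_eq1 \<sigma>_def by blast
  define z where "z i = (\<Sum>t<m. M i t * b t)" for i
  have bz: "\<And>x. bilin p m x M b = (\<Sum>i<p. x i * z i)"
    by (simp add: bilin_def z_def sum_distrib_left mult.assoc)
  have vDu: "(\<Sum>i<p. \<Sum>t<m. v i * D i t * u t) \<ge> - sqrt FD2"
  proof -
    have "(\<Sum>i<p. \<Sum>t<m. D i t * (v i * u t))\<^sup>2 \<le> FD2 * (\<Sum>i<p. \<Sum>t<m. (v i * u t)\<^sup>2)"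
      unfolding FD2_def by (rule CS2)
    also have "(\<Sum>i<p. \<Sum>t<m. (v i * u t)\<^sup>2) = 1"
      using vs us by (simp add: power_mult_distrib sum_distrib_left[symmetric] sum_distrib_right[symmetric])
    finally have "\<bar>\<Sum>i<p. \<Sum>t<m. D i t * (v i * u t)\<bar>\<^sup>2 \<le> FD2" by simp
    then have "\<bar>\<Sum>i<p. \<Sum>t<m. D i t * (v i * u t)\<bar> \<le> sqrt FD2" by (rule real_le_rsqrt)
    then show ?thesis by (simp add: algebra_simps)
  qed
  have "bilin p m v M u = (\<Sum>i<p. \<Sum>t<m. (v i)\<^sup>2 * (u t)\<^sup>2) + (\<Sum>i<p. \<Sum>t<m. v i * D i t * u t)"
    unfolding bilin_def D_def by (simp add: sum.distrib[symmetric] algebra_simps power2_eq_square)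
  also have "(\<Sum>i<p. \<Sum>t<m. (v i)\<^sup>2 * (u t)\<^sup>2) = 1"
    using vs us by (simp add: sum_distrib_left[symmetric] sum_distrib_right[symmetric])
  finally have "bilin p m v M u \<ge> 1 - sqrt FD2" using vDu by linarith
  moreover note sF
  ultimately have sig: "\<sigma> \<ge> 1 - e" using optu by linarith
  then have sigpos: "\<sigma> > 0" using e by linarith
  define Z where "Z = (\<Sum>i<p. (z i)\<^sup>2)"
  have Znn: "Z \<ge> 0" unfolding Z_def by (intro sum_nonneg) auto
  have "\<sigma>\<^sup>2 \<le> Z"
  proof -
    have "\<sigma>\<^sup>2 = (\<Sum>i<p. a i * z i)\<^sup>2" using bz \<sigma>_def by simp
    also have "\<dots> \<le> (\<Sum>i<p. (a i)\<^sup>2) * Z" unfolding Z_def by (rule Cauchy_Schwarz_ineq_sum)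
    finally show ?thesis using as by simp
  qed
  moreover have "Z \<le> \<sigma>\<^sup>2"
  proof (cases "Z = 0")
    case True then show ?thesis by simp
  next
    case False
    then have Zp: "Z > 0" using Znn by simp
    define x where "x i = z i / sqrt Z" for i
    have "(\<Sum>i<p. (x i)\<^sup>2) = Z / Z"
      unfolding x_def Z_def using Znn unfolding Z_def by (simp add: power_divide sum_divide_distrib[symmetric])
    then have "(\<Sum>i<p. (x i)\<^sup>2) = 1" using Zp by simp
    then have "bilin p m x M b \<le> \<sigma>" by (rule opt)
    moreover have "bilin p m x M b = Z / sqrt Z"
      unfolding bz x_def Z_def by (simp add: power2_eq_square sum_divide_distrib[symmetric])
    moreover have "Z / sqrt Z = sqrt Z" using Zp by (simp add: real_div_sqrt)
    ultimately have "sqrt Z \<le> \<sigma>" by simp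
    then have "(sqrt Z)\<^sup>2 \<le> \<sigma>\<^sup>2" by (rule power_mono) (simp add: Znn)
    then show ?thesis using Znn by simp
  qed
  ultimately have sZ: "\<sigma>\<^sup>2 = Z" by simp
  have "(\<Sum>i<p. (a i - z i / \<sigma>)\<^sup>2) = (\<Sum>i<p. (a i)\<^sup>2) - 2 * (\<Sum>i<p. a i * z i) / \<sigma> + Z / \<sigma>\<^sup>2"
    unfolding Z_def using sigpos
    by (simp add: power2_diff sum.distrib sum_subtractf sum_divide_distrib[symmetric] sum_distrib_left power_divide algebra_simps)
  also have "\<dots> = 0"
  proof -
    have aZ: "(\<Sum>i<p. a i * z i) = \<sigma>" using bz[of a] \<sigma>_def by simp
    show ?thesis unfolding aZ as sZ[symmetric] using sigpos by simp
  qed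
  finally have "\<forall>i\<in>{..<p}. (a i - z i / \<sigma>)\<^sup>2 = 0"
    by (subst sum_nonneg_eq_0_iff[symmetric]) auto
  then have az: "\<And>i. i < p \<Longrightarrow> a i = z i / \<sigma>" by auto
  define y where "y i = (\<Sum>t<m. D i t * b t)" for i
  define \<beta> where "\<beta> = (\<Sum>t<m. u t * b t)"
  have zy: "\<And>i. z i = \<beta> * v i + y i"
    unfolding z_def y_def \<beta>_def D_def by (simp add: sum_distrib_left sum.distrib[symmetric] algebra_simps)
  define vy where "vy = (\<Sum>i<p. v i * y i)"
  define Y where "Y = (\<Sum>i<p. (y i)\<^sup>2)"
  have Zexp: "Z = \<beta>\<^sup>2 + 2 * \<beta> * vy + Y"
  proof -
    have "Z = (\<Sum>i<p. \<beta>\<^sup>2 * (v i)\<^sup>2 + 2 * \<beta> * (v i * y i) + (y i)\<^sup>2)"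
      unfolding Z_def zy by (simp add: power2_sum algebra_simps)
    also have "\<dots> = \<beta>\<^sup>2 * (\<Sum>i<p. (v i)\<^sup>2) + 2 * \<beta> * vy + Y"
      unfolding vy_def Y_def by (simp add: sum.distrib sum_distrib_left)
    finally show ?thesis using vs by simp
  qed
  define c where "c = vdot p v a"
  have sc: "\<sigma> * c = \<beta> + vy"
  proof -
    have "\<sigma> * c = (\<Sum>i<p. v i * z i)"
      unfolding c_def vdot_def using az sigpos by (simp add: sum_distrib_left)
    also have "\<dots> = \<beta> * (\<Sum>i<p. (v i)\<^sup>2) + vy"
      unfolding zy vy_def by (simp add: sum.distrib sum_distrib_left algebra_simps power2_eq_square)
    finally show ?thesis using vs by simp
  qed
  have vy2: "vy\<^sup>2 \<ge> 0" by simp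
  have YF: "Y \<le> FD2"
  proof -
    have "Y \<le> (\<Sum>i<p. (\<Sum>t<m. (D i t)\<^sup>2) * (\<Sum>t<m. (b t)\<^sup>2))"
      unfolding Y_def y_def by (intro sum_mono Cauchy_Schwarz_ineq_sum)
    then show ?thesis using bs unfolding FD2_def by simp
  qed
  have key: "\<sigma>\<^sup>2 * (1 - c\<^sup>2) \<le> e\<^sup>2"
  proof -
    have "\<sigma>\<^sup>2 * (1 - c\<^sup>2) = \<sigma>\<^sup>2 - (\<sigma> * c)\<^sup>2" by (simp add: algebra_simps power_mult_distrib)
    also have "\<dots> = Y - vy\<^sup>2" using sZ Zexp sc by (simp add: power2_sum)
    finally show ?thesis using YF FD2e vy2 by linarith
  qed
  show ?thesis
  proof (cases "1 - c\<^sup>2 \<ge> 0")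
    case False
    then have "sin_angle p v a < 0" unfolding sin_angle_def c_def by simp
    then show ?thesis using e0 by linarith
  next
    case True
    have s2: "\<sigma>\<^sup>2 \<ge> 1/4"
    proof -
      have "1/2 \<le> \<sigma>" using sig e by linarith
      then have "(1/2)\<^sup>2 \<le> \<sigma>\<^sup>2" by (rule power_mono) simp
      then show ?thesis by (simp add: power2_eq_square)
    qed
    have "(1/4) * (1 - c\<^sup>2) \<le> \<sigma>\<^sup>2 * (1 - c\<^sup>2)" using s2 True by (rule mult_right_mono)
    then have "1 - c\<^sup>2 \<le> (2*e)\<^sup>2" using key by (simp add: power_mult_distrib)
    then have "sqrt (1 - c\<^sup>2) \<le> 2 * e" using e0 by (simp add: real_sqrt_le_iff real_le_lsqrt)
    then show ?thesis unfolding sin_angle_def c_def .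
  qed
qed



lemma frob_bound:
  fixes p m G :: nat and J :: "nat \<Rightarrow> nat set"
    and C1 \<delta> lam k :: real
    and v u :: "nat \<Rightarrow> real" and T Mh :: "nat \<Rightarrow> nat \<Rightarrow> real"
  assumes J_sub: "\<forall>g<G. J g \<subseteq> {..<p}"
    and J_cover: "(\<Union>g<G. J g) = {..<p}"
    and C1_pos: "C1 > 0"
    and overlap: "\<forall>j<p. real (card {g. g < G \<and> j \<in> J g}) \<le> C1"
    and delta_pos: "\<delta> > 0"
    and vs: "(\<Sum>i<p. (v i)\<^sup>2) = 1" and us: "(\<Sum>t<m. (u t)\<^sup>2) = 1"
    and sparse: "(\<Sum>g\<in>{g. g < G \<and> (\<exists>j\<in>J g. v j \<noteq> 0)}. real (card (J g))) \<le> k"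
    and lambda_pos: "lam > 0"
    and T_close: "grp_dual_norm G J m (\<lambda>i t. T i t - \<delta> * v i * u t) \<le> lam"
    and Mh_argmax: "is_argmax_on_S p m
                      (\<lambda>M. mat_inner p m T M - lam * grp_norm G J m M) Mh"
  shows "frob p m (\<lambda>i t. v i * u t - Mh i t) \<le> 4 * lam * sqrt (C1 * real m * k) / \<delta>"
proof -
  define E where "E i t = T i t - \<delta> * v i * u t" for i t
  define Ms where "Ms i t = v i * u t" for i t
  define D where "D i t = v i * u t - Mh i t" for i t
  define S where "S = {g. g < G \<and> (\<exists>j\<in>J g. v j \<noteq> 0)}"
  define cb where "cb M g t = col_block_norm (J g) t M" for M g t
  define FD2 where "FD2 = (\<Sum>i<p. \<Sum>t<m. (D i t)\<^sup>2)"
  have FD2_nn: "FD2 \<ge> 0" unfolding FD2_def by (intro sum_nonneg) auto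
  have finJ: "\<And>g. g < G \<Longrightarrow> finite (J g)" using J_sub finite_subset by blast
  have cb_nn: "\<And>M g t. cb M g t \<ge> 0" unfolding cb_def col_block_norm_def by (simp add: sum_nonneg)
  have Eb: "\<And>g t. g < G \<Longrightarrow> t < m \<Longrightarrow> cb E g t \<le> lam * sqrt (real (card (J g)))"
  proof -
    fix g t assume g: "g < G" and t: "t < m"
    let ?F = "(\<lambda>(g, t). col_block_norm (J g) t E / sqrt (real (card (J g)))) ` ({..<G} \<times> {..<m})"
    have "finite ?F" by simp
    moreover have "col_block_norm (J g) t E / sqrt (real (card (J g))) \<in> ?F" using g t by force
    ultimately have "col_block_norm (J g) t E / sqrt (real (card (J g))) \<le> Max ?F" by (rule Max_ge)
    also have "Max ?F \<le> lam" using T_close unfolding grp_dual_norm_def E_def by simp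
    finally have q: "col_block_norm (J g) t E / sqrt (real (card (J g))) \<le> lam" .
    show "cb E g t \<le> lam * sqrt (real (card (J g)))"
    proof (cases "card (J g) = 0")
      case True
      then have "J g = {}" using finJ[OF g] by simp
      then show ?thesis unfolding cb_def col_block_norm_def by simp
    next
      case False
      then have "sqrt (real (card (J g))) > 0" by simp
      then show ?thesis using q unfolding cb_def by (simp add: pos_divide_le_eq mult.commute)
    qed
  qed
  have MsMs: "(\<Sum>i<p. \<Sum>t<m. (Ms i t)\<^sup>2) = 1"
    unfolding Ms_def using vs us
    by (simp add: power_mult_distrib sum_distrib_left[symmetric] sum_distrib_right[symmetric])
  have frobMs: "frob p m Ms \<le> 1" unfolding frob_def using MsMs by simp
  have Mh2: "(\<Sum>i<p. \<Sum>t<m. (Mh i t)\<^sup>2) \<le> 1"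
    using Mh_argmax unfolding is_argmax_on_S_def frob_def by simp
  have opt: "mat_inner p m T Ms - lam * grp_norm G J m Ms \<le> mat_inner p m T Mh - lam * grp_norm G J m Mh"
    using Mh_argmax frobMs unfolding is_argmax_on_S_def by blast
  have Tdec: "\<And>M. mat_inner p m T M = \<delta> * mat_inner p m Ms M + mat_inner p m E M"
    unfolding mat_inner_def E_def Ms_def
    by (simp add: sum_distrib_left sum.distrib[symmetric] algebra_simps)
  have inMsMs: "mat_inner p m Ms Ms = 1" using MsMs unfolding mat_inner_def by (simp add: power2_eq_square)
  have FD2exp: "FD2 = (\<Sum>i<p. \<Sum>t<m. (Mh i t)\<^sup>2) - 2 * mat_inner p m Ms Mh + 1"
  proof -
    have "FD2 = (\<Sum>i<p. \<Sum>t<m. (Mh i t)\<^sup>2 - 2 * (Ms i t * Mh i t) + (Ms i t)\<^sup>2)"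
      unfolding FD2_def D_def Ms_def by (simp add: power2_diff algebra_simps)
    also have "\<dots> = (\<Sum>i<p. \<Sum>t<m. (Mh i t)\<^sup>2) - 2 * mat_inner p m Ms Mh + (\<Sum>i<p. \<Sum>t<m. (Ms i t)\<^sup>2)"
      unfolding mat_inner_def by (simp add: sum.distrib sum_subtractf sum_distrib_left)
    finally show ?thesis using MsMs by simp
  qed
  have EinD: "mat_inner p m E Ms - mat_inner p m E Mh = mat_inner p m E D"
    unfolding mat_inner_def D_def Ms_def by (simp add: sum_subtractf[symmetric] algebra_simps)
  have step1: "\<delta> / 2 * FD2 \<le> - mat_inner p m E D + lam * (grp_norm G J m Ms - grp_norm G J m Mh)"
  proof -
    have "\<delta> * (1 - mat_inner p m Ms Mh) \<le> - mat_inner p m E D + lam * (grp_norm G J m Ms - grp_norm G J m Mh)"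
      using opt Tdec[of Ms] Tdec[of Mh] inMsMs EinD by (simp add: algebra_simps)
    moreover have "FD2 \<le> 2 * (1 - mat_inner p m Ms Mh)" using FD2exp Mh2 by (simp add: algebra_simps)
    moreover have "\<delta> / 2 * FD2 \<le> \<delta> / 2 * (2 * (1 - mat_inner p m Ms Mh))"
      using calculation(2) delta_pos by (intro mult_left_mono) auto
    moreover have "\<delta> / 2 * (2 * (1 - mat_inner p m Ms Mh)) = \<delta> * (1 - mat_inner p m Ms Mh)" by simp
    ultimately show ?thesis by linarith
  qed
  have step2: "- mat_inner p m E D \<le> lam * grp_norm G J m D"
  proof -
    have "- mat_inner p m E D = (\<Sum>t<m. \<Sum>i<p. - (E i t * D i t))"
      unfolding mat_inner_def by (subst sum.swap) (simp add: sum_negf)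
    also have "\<dots> \<le> (\<Sum>t<m. \<Sum>i<p. \<bar>E i t\<bar> * \<bar>D i t\<bar>)"
      by (intro sum_mono) (simp add: abs_mult[symmetric])
    also have "\<dots> \<le> (\<Sum>t<m. \<Sum>g<G. \<Sum>j\<in>J g. \<bar>E j t\<bar> * \<bar>D j t\<bar>)"
      by (intro sum_mono sum_cover_le[OF J_sub J_cover]) simp
    also have "\<dots> \<le> (\<Sum>t<m. \<Sum>g<G. cb E g t * cb D g t)"
      unfolding cb_def cbn_L2 by (intro sum_mono L2_set_mult_ineq)
    also have "\<dots> \<le> (\<Sum>t<m. \<Sum>g<G. lam * sqrt (real (card (J g))) * cb D g t)"
      by (intro sum_mono mult_right_mono Eb cb_nn) auto
    also have "\<dots> = lam * grp_norm G J m D"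
      unfolding grp_norm_def cb_def
      by (subst sum.swap) (simp add: sum_distrib_left mult.assoc)
    finally show ?thesis .
  qed
  have step3: "grp_norm G J m D + grp_norm G J m Ms - grp_norm G J m Mh
      \<le> 2 * (\<Sum>g\<in>S. \<Sum>t<m. sqrt (real (card (J g))) * cb D g t)"
  proof -
    have "grp_norm G J m D + grp_norm G J m Ms - grp_norm G J m Mh
        = (\<Sum>g<G. sqrt (real (card (J g))) * (\<Sum>t<m. cb D g t + cb Ms g t - cb Mh g t))"
      unfolding grp_norm_def cb_def
      by (simp add: sum.distrib sum_subtractf distrib_left right_diff_distrib)
    also have "\<dots> \<le> (\<Sum>g<G. if g \<in> S then 2 * (\<Sum>t<m. sqrt (real (card (J g))) * cb D g t) else 0)"
    proof (rule sum_mono)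
      fix g assume g: "g \<in> {..<G}"
      show "sqrt (real (card (J g))) * (\<Sum>t<m. cb D g t + cb Ms g t - cb Mh g t)
          \<le> (if g \<in> S then 2 * (\<Sum>t<m. sqrt (real (card (J g))) * cb D g t) else 0)"
      proof (cases "g \<in> S")
        case True
        have "\<And>t. cb Ms g t \<le> cb Mh g t + cb D g t"
        proof -
          fix t
          have "cb Ms g t = L2_set (\<lambda>j. Mh j t + D j t) (J g)"
            unfolding cb_def cbn_L2 D_def Ms_def by simp
          also have "\<dots> \<le> cb Mh g t + cb D g t"
            unfolding cb_def cbn_L2 by (rule L2_set_triangle_ineq)
          finally show "cb Ms g t \<le> cb Mh g t + cb D g t" .
        qed
        then have "(\<Sum>t<m. cb D g t + cb Ms g t - cb Mh g t) \<le> (\<Sum>t<m. 2 * cb D g t)"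
          by (intro sum_mono) (smt (verit))
        then have "sqrt (real (card (J g))) * (\<Sum>t<m. cb D g t + cb Ms g t - cb Mh g t)
            \<le> sqrt (real (card (J g))) * (\<Sum>t<m. 2 * cb D g t)" by (rule mult_left_mono) simp
        then show ?thesis using True by (simp add: sum_distrib_left algebra_simps)
      next
        case False
        then have v0: "\<And>j. j \<in> J g \<Longrightarrow> v j = 0" using g unfolding S_def by auto
        have "\<And>t. cb D g t + cb Ms g t - cb Mh g t = 0"
          unfolding cb_def col_block_norm_def D_def Ms_def using v0 by simp
        then show ?thesis using False by simp
      qed
    qed
    also have "\<dots> = 2 * (\<Sum>g\<in>S. \<Sum>t<m. sqrt (real (card (J g))) * cb D g t)"
    proof -
      have "{..<G} \<inter> S = S" unfolding S_def by auto
      then show ?thesis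
        using sum.inter_restrict[of "{..<G}" "\<lambda>g. 2 * (\<Sum>t<m. sqrt (real (card (J g))) * cb D g t)" S]
        by (simp add: sum_distrib_left)
    qed
    finally show ?thesis .
  qed
  define X where "X = (\<Sum>g\<in>S. \<Sum>t<m. sqrt (real (card (J g))) * cb D g t)"
  have finS: "finite S" unfolding S_def by simp
  have k0: "k \<ge> 0" using sparse by (smt (verit) of_nat_0_le_iff sum_nonneg)
  have step4: "X \<le> sqrt (C1 * real m * k) * sqrt FD2"
  proof -
    have CS: "X\<^sup>2 \<le> (\<Sum>g\<in>S. \<Sum>t<m. (sqrt (real (card (J g))))\<^sup>2) * (\<Sum>g\<in>S. \<Sum>t<m. (cb D g t)\<^sup>2)"
      unfolding X_def by (rule CS2)
    have A1: "(\<Sum>g\<in>S. \<Sum>t<m. (sqrt (real (card (J g))))\<^sup>2) = real m * (\<Sum>g\<in>S. real (card (J g)))"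
      by (simp add: sum_distrib_left mult.commute)
    have A2: "real m * (\<Sum>g\<in>S. real (card (J g))) \<le> real m * k"
      using sparse unfolding S_def by (intro mult_left_mono) auto
    have B1: "(\<Sum>g\<in>S. \<Sum>t<m. (cb D g t)\<^sup>2) \<le> (\<Sum>g<G. \<Sum>t<m. (cb D g t)\<^sup>2)"
      by (rule sum_mono2) (auto simp: S_def intro: sum_nonneg)
    have B2: "(\<Sum>g<G. \<Sum>t<m. (cb D g t)\<^sup>2) = (\<Sum>t<m. \<Sum>g<G. \<Sum>j\<in>J g. (D j t)\<^sup>2)"
      by (subst sum.swap) (intro sum.cong refl, simp add: cb_def col_block_norm_def sum_nonneg)
    have B3: "(\<Sum>t<m. \<Sum>g<G. \<Sum>j\<in>J g. (D j t)\<^sup>2) \<le> (\<Sum>t<m. C1 * (\<Sum>j<p. (D j t)\<^sup>2))"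
      by (intro sum_mono sum_overlap_le[OF J_sub overlap]) simp
    have B4: "(\<Sum>t<m. C1 * (\<Sum>j<p. (D j t)\<^sup>2)) = C1 * FD2"
      unfolding FD2_def by (subst sum.swap) (simp add: sum_distrib_left)
    have Bnn: "0 \<le> (\<Sum>g\<in>S. \<Sum>t<m. (cb D g t)\<^sup>2)" by (intro sum_nonneg) auto
    have "X\<^sup>2 \<le> (real m * k) * (C1 * FD2)"
      using CS A1 A2 B1 B2 B3 B4 Bnn k0
      by (smt (verit, best) mult_mono of_nat_0_le_iff zero_le_mult_iff)
    then have "X\<^sup>2 \<le> real m * k * (C1 * FD2)" by simp
    then have "X \<le> sqrt (real m * k * (C1 * FD2))" by (rule real_le_rsqrt)
    also have "\<dots> = sqrt (C1 * real m * k) * sqrt FD2" by (simp add: real_sqrt_mult[symmetric] algebra_simps)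
    finally show ?thesis .
  qed
  define K where "K = sqrt (C1 * real m * k)"
  have K0: "K \<ge> 0" unfolding K_def using C1_pos k0 by simp
  have main: "\<delta> * FD2 \<le> 4 * lam * K * sqrt FD2"
  proof -
    have "\<delta> / 2 * FD2 \<le> lam * (grp_norm G J m D + grp_norm G J m Ms - grp_norm G J m Mh)"
      using step1 step2 lambda_pos by (simp add: algebra_simps)
    also have "\<dots> \<le> lam * (2 * X)" using step3 lambda_pos X_def by (intro mult_left_mono) auto
    also have "\<dots> \<le> lam * (2 * (K * sqrt FD2))" using step4 lambda_pos K_def by (intro mult_left_mono) auto
    finally show ?thesis by (simp add: algebra_simps)
  qed
  have res: "sqrt FD2 \<le> 4 * lam * K / \<delta>"
  proof (cases "FD2 = 0")
    case True then show ?thesis using lambda_pos K0 delta_pos by simp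
  next
    case False
    then have sp: "sqrt FD2 > 0" using FD2_nn by simp
    have "\<delta> * sqrt FD2 * sqrt FD2 \<le> 4 * lam * K * sqrt FD2"
      using main FD2_nn by (simp add: mult.assoc)
    then have "\<delta> * sqrt FD2 \<le> 4 * lam * K" using sp by simp
    then show ?thesis using delta_pos by (simp add: pos_le_divide_eq mult.commute)
  qed
  show ?thesis using res unfolding frob_def FD2_def D_def K_def .
qed


lemma lead_transpose:
  assumes "leading_sv_pair p m M a b"
  shows "leading_sv_pair m p (\<lambda>t i. M i t) b a"
proof -
  have bt: "\<And>x y. bilin m p y (\<lambda>t i. M i t) x = bilin p m x M y"
    unfolding bilin_def by (subst sum.swap) (simp add: algebra_simps)
  show ?thesis using assms unfolding leading_sv_pair_def bt by blast
qed

lemma sin_le1: "sin_angle p a b \<le> 1"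
  unfolding sin_angle_def by simp

theorem mainTheorem8:
  fixes p n G :: nat and J :: "nat \<Rightarrow> nat set"
    and C1 \<delta> lam k :: real
    and v u :: "nat \<Rightarrow> real" and T Mh :: "nat \<Rightarrow> nat \<Rightarrow> real"
    and vh uh :: "nat \<Rightarrow> real"
  assumes J_sub: "\<forall>g<G. J g \<subseteq> {..<p}"
    and J_cover: "(\<Union>g<G. J g) = {..<p}"
    and C1_pos: "C1 > 0"
    and overlap: "\<forall>j<p. real (card {g. g < G \<and> j \<in> J g}) \<le> C1"
    and delta_pos: "\<delta> > 0"
    and v_unit: "vnorm p v = 1" and u_unit: "vnorm (n - 1) u = 1"
    and sparse: "(\<Sum>g\<in>{g. g < G \<and> (\<exists>j\<in>J g. v j \<noteq> 0)}. real (card (J g))) \<le> k"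
    and lambda_pos: "lam > 0"
    and T_close: "grp_dual_norm G J (n - 1) (\<lambda>i t. T i t - \<delta> * v i * u t) \<le> lam"
    and Mh_argmax: "is_argmax_on_S p (n - 1)
                      (\<lambda>M. mat_inner p (n - 1) T M - lam * grp_norm G J (n - 1) M) Mh"
    and svd: "leading_sv_pair p (n - 1) Mh vh uh"
  shows "frob p (n - 1) (\<lambda>i t. v i * u t - Mh i t) \<le> 4 * lam * sqrt (C1 * real n * k) / \<delta>
    \<and> max (sin_angle p v vh) (sin_angle (n - 1) u uh) \<le> 8 * lam * sqrt (C1 * real n * k) / \<delta>"
proof -
  have vs: "(\<Sum>i<p. (v i)\<^sup>2) = 1" using v_unit vnorm_eq1 by blast
  have us: "(\<Sum>t<n-1. (u t)\<^sup>2) = 1" using u_unit vnorm_eq1 by blast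
  have k0: "k \<ge> 0" using sparse by (smt (verit) of_nat_0_le_iff sum_nonneg)
  have F1: "frob p (n - 1) (\<lambda>i t. v i * u t - Mh i t) \<le> 4 * lam * sqrt (C1 * real (n - 1) * k) / \<delta>"
    by (rule frob_bound[OF J_sub J_cover C1_pos overlap delta_pos vs us sparse lambda_pos T_close Mh_argmax])
  have "sqrt (C1 * real (n - 1) * k) \<le> sqrt (C1 * real n * k)"
    using C1_pos k0 by (intro real_sqrt_le_mono mult_right_mono mult_left_mono) auto
  then have "4 * lam * sqrt (C1 * real (n - 1) * k) / \<delta> \<le> 4 * lam * sqrt (C1 * real n * k) / \<delta>"
    using lambda_pos delta_pos by (intro divide_right_mono mult_left_mono) auto
  define \<epsilon> where "\<epsilon> = 4 * lam * sqrt (C1 * real n * k) / \<delta>"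
  have F: "frob p (n - 1) (\<lambda>i t. v i * u t - Mh i t) \<le> \<epsilon>"
    using F1 \<open>4 * lam * sqrt (C1 * real (n - 1) * k) / \<delta> \<le> _\<close> unfolding \<epsilon>_def by linarith
  have e8: "8 * lam * sqrt (C1 * real n * k) / \<delta> = 2 * \<epsilon>" unfolding \<epsilon>_def by simp
  have sins: "sin_angle p v vh \<le> 2 * \<epsilon> \<and> sin_angle (n - 1) u uh \<le> 2 * \<epsilon>"
  proof (cases "\<epsilon> < 1/2")
    case False
    then show ?thesis using sin_le1[of p v vh] sin_le1[of "n-1" u uh] by linarith
  next
    case True
    have fa: "sqrt (\<Sum>i<p. \<Sum>t<n-1. (Mh i t - v i * u t)\<^sup>2) \<le> \<epsilon>"
      using F unfolding frob_def by (simp add: power2_commute)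
    have fb: "sqrt (\<Sum>t<n-1. \<Sum>i<p. (Mh i t - u t * v i)\<^sup>2) \<le> \<epsilon>"
    proof -
      have "(\<Sum>t<n-1. \<Sum>i<p. (Mh i t - u t * v i)\<^sup>2) = (\<Sum>i<p. \<Sum>t<n-1. (Mh i t - v i * u t)\<^sup>2)"
        by (subst sum.swap) (simp add: mult.commute)
      then show ?thesis using fa by simp
    qed
    have "sin_angle p v vh \<le> 2 * \<epsilon>"
      by (rule sin_bound[OF vs us svd fa True])
    moreover have "sin_angle (n - 1) u uh \<le> 2 * \<epsilon>"
      by (rule sin_bound[OF us vs lead_transpose[OF svd] fb True])
    ultimately show ?thesis by simp
  qed
  show ?thesis using F sins unfolding e8 \<epsilon>_def[symmetric] by simp
qed

end
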